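(* The subspace $\mathbf{\Pi}^{\textsf{FC}} $ is a graded sub-bialgebra of $(\mathbf{\Pi},\nabla_{\sqcup\!\sqcup},\iota_{\sqcup\!\sqcup},\Delta_\odot,\epsilon_\odot)$.
   Context: Let $\Bbbk$ be a field. For a word $w=w_1\cdots w_m$ of positive integers with $\max(w)\le n$, $[w,n]$ is the linear endomorphism of the $\Bbbk$-span of all words sending a word $v$ of length $n$ to $v_{w_1}\cdots v_{w_m}$ and other words to $0$, of degree $m$. These span a graded bialgebra with product $\nabla_{\sqcup\!\sqcup}([v,m]\otimes[w,n])=[v\sqcup\!\sqcup(w\uparrow m),m+n]$ ($\sqcup\!\sqcup$ the shuffle product, $w\uparrow m$ adds $m$ to each letter), unit $\iota_{\sqcup\!\sqcup}(1)=[\emptyset,0]$, coproduct $\Delta_\odot([w,n])=\sum_{i=0}^m[w_1\cdots w_i,n]\otimes[w_{i+1}\cdots w_m,n]$, counit $\epsilon_\odot([w,n])=1$ if $w=\emptyset$ and $0$ otherwise. For $\pi\in S_{n+1}$ with reduced words $\mathcal{R}(\pi)$ (for $s_i=(i,i+1)$), $[\pi]=\sum_{w\in\mathcal{R}(\pi)}[w,n]$; $\mathbf{\Pi}$ is the span of all $[\pi]$, a graded sub-bialgebra. A permutation is fully commutative if no reduced word contains a consecutive subword $i(i+1)i$ (equivalently, it is 321-avoiding). $\mathbf{\Pi}^{\textsf{FC}}$ is the span of $[\pi]$ over all fully commutative $\pi\in S_n$, $n\ge1$. *)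

theory Defs
  imports "HOL-Combinatorics.Combinatorics" "HOL-Library.Multiset"
begin

text \<open>Basis labels: a pair (w, n) stands for the operator [w,n].  The operators
[w,n] are linearly independent, so the ambient space spanned by them is modelled
as the free vector space over labels: finitely supported functions
label => field.  The tensor square is the free vector space over pairs of labels.\<close>

type_synonym label = "nat list \<times> nat"
type_synonym 'k vec = "label \<Rightarrow> 'k"
type_synonym 'k vec2 = "label \<times> label \<Rightarrow> 'k"

definition supp :: "('b \<Rightarrow> 'k::zero) \<Rightarrow> 'b set" where
  "supp x = {t. x t \<noteq> 0}"

definition is_label :: "label \<Rightarrow> bool" where
  "is_label b \<longleftrightarrow> (\<forall>i\<in>set (fst b). 1 \<le> i \<and> i \<le> snd b)"

definition ambient :: "'k::field vec set" where
  "ambient = {x. finite (supp x) \<and> (\<forall>b\<in>supp x. is_label b)}"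

definition bvec :: "nat list \<Rightarrow> nat \<Rightarrow> 'k::field vec" where
  "bvec w n = (\<lambda>t. if t = (w, n) then 1 else 0)"

definition lin_span :: "('b \<Rightarrow> 'k::field) set \<Rightarrow> ('b \<Rightarrow> 'k) set" where
  "lin_span G = {x. \<exists>A c. finite A \<and> A \<subseteq> G \<and> x = (\<lambda>t. \<Sum>g\<in>A. c g * g t)}"

fun shuffle :: "nat list \<Rightarrow> nat list \<Rightarrow> nat list multiset" where
  "shuffle [] w = {#w#}"
| "shuffle v [] = {#v#}"
| "shuffle (a # v) (b # w) =
     image_mset (Cons a) (shuffle v (b # w)) + image_mset (Cons b) (shuffle (a # v) w)"

definition shift :: "nat list \<Rightarrow> nat \<Rightarrow> nat list" where
  "shift w m = map (\<lambda>i. i + m) w"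

definition nabla_basis :: "label \<Rightarrow> label \<Rightarrow> 'k::field vec" where
  "nabla_basis b1 b2 = (\<lambda>(u, p).
     if p = snd b1 + snd b2
     then of_nat (count (shuffle (fst b1) (shift (fst b2) (snd b1))) u) else 0)"

definition nabla :: "'k::field vec \<Rightarrow> 'k vec \<Rightarrow> 'k vec" where
  "nabla x y = (\<lambda>t. \<Sum>b1\<in>supp x. \<Sum>b2\<in>supp y. x b1 * y b2 * nabla_basis b1 b2 t)"

definition unit_vec :: "'k::field vec" where
  "unit_vec = bvec [] 0"

definition delta_basis :: "label \<Rightarrow> 'k::field vec2" where
  "delta_basis b = (\<lambda>(a, c). of_nat (card {i. i \<le> length (fst b) \<and>
       a = (take i (fst b), snd b) \<and> c = (drop i (fst b), snd b)}))"

definition Delta :: "'k::field vec \<Rightarrow> 'k vec2" where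
  "Delta x = (\<lambda>t. \<Sum>b\<in>supp x. x b * delta_basis b t)"

definition tensor :: "'k::field vec \<Rightarrow> 'k vec \<Rightarrow> 'k vec2" where
  "tensor x y = (\<lambda>(a, c). x a * y c)"

definition tensor_sq :: "'k::field vec set \<Rightarrow> 'k vec2 set" where
  "tensor_sq S = lin_span {tensor x y | x y. x \<in> S \<and> y \<in> S}"

definition homog :: "nat \<Rightarrow> 'k::field vec \<Rightarrow> 'k vec" where
  "homog d x = (\<lambda>(w, n). if length w = d then x (w, n) else 0)"

definition perm_of_word :: "nat list \<Rightarrow> nat \<Rightarrow> nat" where
  "perm_of_word w = foldr (\<lambda>i f. transpose i (Suc i) \<circ> f) w id"

definition reduced_words :: "nat \<Rightarrow> (nat \<Rightarrow> nat) \<Rightarrow> nat list set" where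
  "reduced_words n p = {w. set w \<subseteq> {1..n} \<and> perm_of_word w = p \<and>
      (\<forall>w'. set w' \<subseteq> {1..n} \<and> perm_of_word w' = p \<longrightarrow> length w \<le> length w')}"

definition perm_vec :: "nat \<Rightarrow> (nat \<Rightarrow> nat) \<Rightarrow> 'k::field vec" where
  "perm_vec n p = (\<lambda>t. \<Sum>w\<in>reduced_words n p. bvec w n t)"

definition fully_commutative :: "nat \<Rightarrow> (nat \<Rightarrow> nat) \<Rightarrow> bool" where
  "fully_commutative n p \<longleftrightarrow>
     (\<forall>w\<in>reduced_words n p. \<not> (\<exists>u v i. w = u @ [i, Suc i, i] @ v))"

definition Pi_space :: "'k::field vec set" where
  "Pi_space = lin_span {perm_vec n p | n p. p permutes {1..Suc n}}"

definition PiFC :: "'k::field vec set" where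
  "PiFC = lin_span {perm_vec n p | n p. p permutes {1..Suc n} \<and> fully_commutative n p}"

text \<open>S is a graded sub-bialgebra of (Pi, nabla, iota, Delta, epsilon): a linear
  subspace of Pi, spanned by its homogeneous components, containing the unit,
  closed under the product, and with Delta(S) contained in S (x) S.  (The counit
  restricts automatically.)\<close>
definition graded_sub_bialgebra :: "'k::field vec set \<Rightarrow> bool" where
  "graded_sub_bialgebra S \<longleftrightarrow>
     S \<subseteq> Pi_space \<and>
     (\<lambda>t. 0) \<in> S \<and> (\<forall>x\<in>S. \<forall>y\<in>S. (\<lambda>t. x t + y t) \<in> S) \<and> (\<forall>c. \<forall>x\<in>S. (\<lambda>t. c * x t) \<in> S) \<and>
     (\<forall>x\<in>S. \<forall>d. homog d x \<in> S) \<and>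
     unit_vec \<in> S \<and>
     (\<forall>x\<in>S. \<forall>y\<in>S. nabla x y \<in> S) \<and>
     (\<forall>x\<in>S. Delta x \<in> tensor_sq S)"

end

theory Submission
  imports Defs
begin


abbreviation sw :: "nat \<Rightarrow> nat \<Rightarrow> nat" where "sw i \<equiv> transpose i (Suc i)"
abbreviation pw :: "nat list \<Rightarrow> nat \<Rightarrow> nat" where "pw \<equiv> perm_of_word"

lemma pw_Nil[simp]: "pw [] = id" by (simp add: perm_of_word_def)
lemma pw_Cons[simp]: "pw (i#w) = sw i \<circ> pw w" by (simp add: perm_of_word_def)
lemma pw_append: "pw (w @ v) = pw w \<circ> pw v"
  by (induction w) (auto simp: comp_assoc)
lemma pw_snoc: "pw (w @ [i]) = pw w \<circ> sw i"
  by (simp add: pw_append)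

lemma pw_permutes: "set w \<subseteq> {a..<b} \<Longrightarrow> pw w permutes {a..b}"
proof (induction w)
  case Nil then show ?case by (simp only: pw_Nil permutes_id)
next
  case (Cons i w)
  have "sw i permutes {a..b}" using Cons.prems by (intro permutes_swap_id) auto
  moreover have "pw w permutes {a..b}" using Cons by auto
  ultimately have "sw i \<circ> pw w permutes {a..b}" by (rule permutes_compose[rotated])
  then show ?case by (simp only: pw_Cons)
qed

lemma pw_permutes0: "\<exists>K. pw w permutes {0..K}"
proof -
  obtain K where "set w \<subseteq> {0..<K}"
  proof -
    obtain m where "\<forall>n\<in>set w. n < m" using finite_nat_set_iff_bounded[of "set w"] by auto
    then have "set w \<subseteq> {0..<m}" by auto
    then show ?thesis using that by blast
  qed
  then show ?thesis using pw_permutes by blast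
qed

lemma inj_pw: "inj (pw w)"
proof (induction w)
  case (Cons i w)
  have "inj (sw i \<circ> pw w)" by (rule inj_compose) (simp_all add: inj_transpose Cons.IH)
  then show ?case by (simp only: pw_Cons)
qed (simp only: pw_Nil inj_on_id)

definition invs :: "(nat \<Rightarrow> nat) \<Rightarrow> (nat \<times> nat) set" where
  "invs p = {(a,b). a < b \<and> p b < p a}"
definition ninv :: "(nat \<Rightarrow> nat) \<Rightarrow> nat" where "ninv p = card (invs p)"

lemma invs_sub: assumes "p permutes {a..b}" shows "invs p \<subseteq> {a..b} \<times> {a..b}"
proof
  fix z assume "z \<in> invs p"
  then obtain x y where z: "z = (x,y)" "x < y" "p y < p x" by (auto simp: invs_def)
  have px: "x \<notin> {a..b} \<Longrightarrow> p x = x" "y \<notin> {a..b} \<Longrightarrow> p y = y"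
    using permutes_not_in[OF assms] by auto
  have ix: "x \<in> {a..b} \<Longrightarrow> p x \<in> {a..b}" "y \<in> {a..b} \<Longrightarrow> p y \<in> {a..b}"
    using permutes_in_image[OF assms] by auto
  have "x \<in> {a..b}"
  proof (rule ccontr)
    assume nx: "x \<notin> {a..b}"
    show False
    proof (cases "x < a")
      case True
      then show False using z px ix nx by (cases "y \<in> {a..b}") auto
    next
      case False
      then show False using z px ix nx by auto
    qed
  qed
  moreover have "y \<in> {a..b}"
  proof (rule ccontr)
    assume ny: "y \<notin> {a..b}"
    show False
    proof (cases "y < a")
      case True
      then show False using z px ix ny by auto
    next
      case False
      then show False using z px ix ny \<open>x \<in> {a..b}\<close> by auto
    qed
  qed
  ultimately show "z \<in> {a..b} \<times> {a..b}" using z by auto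
qed

lemma finite_invs_pw: "finite (invs (pw w))"
  using pw_permutes0[of w] invs_sub by (meson finite_SigmaI finite_atLeastAtMost finite_subset)

lemma sw_mono: "a < b \<Longrightarrow> (a,b) \<noteq> (i, Suc i) \<Longrightarrow> sw i a < sw i b"
  by (auto simp: transpose_def)

lemma ninv_sw:
  assumes inj: "inj p" and fin: "finite (invs p)"
  shows "p i < p (Suc i) \<Longrightarrow> ninv (p \<circ> sw i) = Suc (ninv p)"
    and "p (Suc i) < p i \<Longrightarrow> Suc (ninv (p \<circ> sw i)) = ninv p"
proof -
  define e where "e = (i, Suc i)"
  define \<phi> where "\<phi> = (\<lambda>(a::nat,b::nat). (sw i a, sw i b))"
  have phiphi: "\<phi> (\<phi> z) = z" for z by (auto simp: \<phi>_def split: prod.splits)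
  have injphi: "inj \<phi>" by (metis injI phiphi)
  have eq: "invs (p \<circ> sw i) - {e} = \<phi> ` (invs p - {e})"
  proof
    show "invs (p \<circ> sw i) - {e} \<subseteq> \<phi> ` (invs p - {e})"
    proof
      fix z assume z: "z \<in> invs (p \<circ> sw i) - {e}"
      then obtain a b where ab: "z = (a,b)" "a < b" "p (sw i b) < p (sw i a)" "(a,b) \<noteq> e"
        by (auto simp: invs_def)
      have "sw i a < sw i b" using sw_mono ab e_def by auto
      moreover have "\<phi> z \<noteq> e" using ab by (auto simp: \<phi>_def e_def transpose_def split: if_splits)
      ultimately have "\<phi> z \<in> invs p - {e}" using ab by (auto simp: invs_def \<phi>_def)
      then show "z \<in> \<phi> ` (invs p - {e})" by (metis image_eqI phiphi)
    qed
  next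
    show "\<phi> ` (invs p - {e}) \<subseteq> invs (p \<circ> sw i) - {e}"
    proof
      fix z assume "z \<in> \<phi> ` (invs p - {e})"
      then obtain a b where ab: "z = \<phi> (a,b)" "a < b" "p b < p a" "(a,b) \<noteq> e"
        by (auto simp: invs_def)
      have "sw i a < sw i b" using sw_mono ab e_def by auto
      moreover have "z \<noteq> e" using ab by (auto simp: \<phi>_def e_def transpose_def split: if_splits)
      ultimately show "z \<in> invs (p \<circ> sw i) - {e}" using ab by (auto simp: invs_def \<phi>_def)
    qed
  qed
  have c1: "card (invs (p \<circ> sw i) - {e}) = card (invs p - {e})"
    using eq card_image[OF inj_on_subset[OF injphi]] by simp
  have finB: "finite (invs (p \<circ> sw i) - {e})" using eq fin by simp
  hence finB': "finite (invs (p \<circ> sw i))" by simp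
  show "p i < p (Suc i) \<Longrightarrow> ninv (p \<circ> sw i) = Suc (ninv p)"
  proof -
    assume a: "p i < p (Suc i)"
    have "e \<in> invs (p \<circ> sw i)" "e \<notin> invs p" using a by (auto simp: invs_def e_def)
    then show ?thesis using c1 finB' fin unfolding ninv_def
      by (metis Diff_empty Diff_insert0 card.remove)
  qed
  show "p (Suc i) < p i \<Longrightarrow> Suc (ninv (p \<circ> sw i)) = ninv p"
  proof -
    assume a: "p (Suc i) < p i"
    have "e \<notin> invs (p \<circ> sw i)" "e \<in> invs p" using a by (auto simp: invs_def e_def)
    then show ?thesis using c1 finB' fin unfolding ninv_def
      by (metis Diff_empty Diff_insert0 card.remove)
  qed
qed



definition invred :: "nat list \<Rightarrow> bool" where "invred w \<longleftrightarrow> ninv (pw w) = length w"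

lemma pw_ne: "pw w i \<noteq> pw w (Suc i)"
  using inj_pw[of w] by (metis injD n_not_Suc_n)

lemma ninv_snoc_asc: "pw w i < pw w (Suc i) \<Longrightarrow> ninv (pw (w@[i])) = Suc (ninv (pw w))"
  unfolding pw_snoc using ninv_sw(1)[OF inj_pw finite_invs_pw] by blast
lemma ninv_snoc_desc: "pw w (Suc i) < pw w i \<Longrightarrow> Suc (ninv (pw (w@[i]))) = ninv (pw w)"
  unfolding pw_snoc using ninv_sw(2)[OF inj_pw finite_invs_pw] by blast

lemma ninv_id[simp]: "ninv id = 0"
proof -
  have "invs id = {}" by (auto simp: invs_def)
  then show ?thesis by (simp only: ninv_def card.empty)
qed

lemma ninv_le: "ninv (pw w) \<le> length w"
proof (induction w rule: rev_induct)
  case Nil then show ?case by (simp only: pw_Nil ninv_id)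
next
  case (snoc i w)
  show ?case
  proof (cases "pw w i < pw w (Suc i)")
    case True then show ?thesis using ninv_snoc_asc snoc by simp
  next
    case False
    then have "pw w (Suc i) < pw w i" using pw_ne[of w i] by linarith
    then show ?thesis using ninv_snoc_desc snoc by fastforce
  qed
qed

lemma invred_snoc: "invred (w@[i]) \<longleftrightarrow> invred w \<and> pw w i < pw w (Suc i)"
proof (cases "pw w i < pw w (Suc i)")
  case True then show ?thesis using ninv_snoc_asc[OF True] by (simp add: invred_def)
next
  case False
  then have d: "pw w (Suc i) < pw w i" using pw_ne[of w i] by linarith
  have "ninv (pw (w@[i])) \<noteq> length (w@[i])" using ninv_snoc_desc[OF d] ninv_le[of w] by simp
  then show ?thesis using False by (simp add: invred_def)
qed

lemma invred_Nil[simp]: "invred []" by (simp add: invred_def)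

lemma invred_prefix: "invred (w@v) \<Longrightarrow> invred w"
  by (induction v rule: rev_induct) (auto simp: invred_snoc simp flip: append_assoc)

lemma ninv_Cons_le: "ninv (pw (i#w)) \<le> Suc (ninv (pw w))"
proof -
  define p where "p = pw w"
  have inj: "inj p" using inj_pw p_def by simp
  have q: "pw (i#w) = sw i \<circ> p" by (simp add: p_def)
  have sub: "invs (sw i \<circ> p) - invs p \<subseteq> {(inv p i, inv p (Suc i))}"
  proof
    fix z assume z: "z \<in> invs (sw i \<circ> p) - invs p"
    then obtain a b where ab: "z = (a,b)" "a < b" "sw i (p b) < sw i (p a)" "\<not> p b < p a"
      by (auto simp: invs_def)
    have "p a \<noteq> p b" using inj ab(2) by (metis injD less_irrefl)
    then have "p a < p b" using ab(4) by linarith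
    then have "(p a, p b) = (i, Suc i)" using sw_mono[of "p a" "p b" i] ab(3) by fastforce
    then have "a = inv p i \<and> b = inv p (Suc i)" using inj by (metis Pair_inject inv_f_f)
    then show "z \<in> {(inv p i, inv p (Suc i))}" using ab(1) by simp
  qed
  have fin: "finite (invs p)" using finite_invs_pw p_def by simp
  have finq: "finite (invs (sw i \<circ> p))" by (metis q finite_invs_pw)
  have "invs (sw i \<circ> p) \<subseteq> invs p \<union> (invs (sw i \<circ> p) - invs p)" by blast
  then have "card (invs (sw i \<circ> p)) \<le> card (invs p \<union> (invs (sw i \<circ> p) - invs p))"
    using fin finq by (intro card_mono) auto
  also have "\<dots> \<le> card (invs p) + card (invs (sw i \<circ> p) - invs p)" by (rule card_Un_le)
  also have "\<dots> \<le> card (invs p) + 1"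
    using card_mono[OF _ sub] by simp
  finally show ?thesis unfolding q ninv_def p_def by simp
qed

lemma ninv_append_le: "ninv (pw (x@y)) \<le> length x + ninv (pw y)"
proof (induction x)
  case (Cons i x)
  have a: "ninv (pw ((i#x)@y)) \<le> Suc (ninv (pw (x@y)))"
    using ninv_Cons_le[of i "x@y"] by (simp only: append_Cons)
  show ?case using a Cons.IH by (simp only: length_Cons)
qed simp

lemma invred_suffix: "invred (x@y) \<Longrightarrow> invred y"
  using ninv_append_le[of x y] ninv_le[of y] by (simp add: invred_def)

lemma invred_len: "invred u \<Longrightarrow> invred v \<Longrightarrow> pw u = pw v \<Longrightarrow> length u = length v"
  by (simp add: invred_def)

lemma exists_inv: assumes "bij p" "p \<noteq> id" shows "\<exists>a b. a < b \<and> p b < (p a :: nat)"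
proof -
  have ex: "\<exists>k. p k \<noteq> k" using assms(2) by (auto simp: fun_eq_iff)
  define k where "k = (LEAST k. p k \<noteq> k)"
  have pk: "p k \<noteq> k" using LeastI_ex[OF ex] k_def by simp
  have below: "j < k \<Longrightarrow> p j = j" for j using not_less_Least k_def by blast
  have inj: "inj p" using assms(1) bij_is_inj by blast
  have gt: "p k > k"
  proof (rule ccontr)
    assume "\<not> p k > k"
    then have "p k < k" using pk by linarith
    then have "p (p k) = p k" using below by blast
    then show False using inj pk by (metis injD)
  qed
  obtain q where q: "p q = k" using assms(1) by (metis bij_pointE)
  have "q \<noteq> k" using q pk by blast
  moreover have "\<not> q < k" using below q pk by (metis less_irrefl)
  ultimately have "k < q" by linarith
  then show ?thesis using q gt by blast
qed

lemma exists_desc: "a < b \<Longrightarrow> p b < (p a::nat) \<Longrightarrow> \<exists>i. a \<le> i \<and> i < b \<and> p (Suc i) < p i"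
proof (induction b)
  case 0 then show ?case by simp
next
  case (Suc b)
  show ?case
  proof (cases "p (Suc b) < p b")
    case True then show ?thesis using Suc by (intro exI[of _ b]) auto
  next
    case False
    then have "a < b" using Suc.prems by (metis less_SucE not_less_iff_gr_or_eq order.strict_trans2 linorder_not_less)
    moreover have "p b < p a" using False Suc.prems by linarith
    ultimately show ?thesis using Suc.IH by (meson less_SucI)
  qed
qed

lemma bubble: "p permutes {a..b} \<Longrightarrow> \<exists>w. set w \<subseteq> {a..<b} \<and> pw w = p \<and> length w = ninv p"
proof (induction "ninv p" arbitrary: p rule: less_induct)
  case less
  show ?case
  proof (cases "p = id")
    case True then show ?thesis by (intro exI[of _ "[]"]) simp
  next
    case False
    have bij: "bij p" using less.prems permutes_bij by blast
    obtain x y where xy: "x < y" "p y < p x" using exists_inv[OF bij False] by blast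
    have "(x,y) \<in> invs p" using xy by (simp add: invs_def)
    then have xyin: "x \<in> {a..b}" "y \<in> {a..b}" using invs_sub[OF less.prems] by auto
    obtain i where i: "x \<le> i" "i < y" "p (Suc i) < p i" using exists_desc[OF xy] by blast
    have ir: "a \<le> i" "i < b" using i xyin by auto
    have swp: "sw i permutes {a..b}" using ir by (intro permutes_swap_id) auto
    have p'p: "(p \<circ> sw i) permutes {a..b}" by (rule permutes_compose[OF swp less.prems])
    have inj: "inj p" using bij bij_is_inj by blast
    have fin: "finite (invs p)" using invs_sub[OF less.prems] finite_subset by blast
    have dec: "Suc (ninv (p \<circ> sw i)) = ninv p" using ninv_sw(2)[OF inj fin i(3)] .
    obtain w where w: "set w \<subseteq> {a..<b}" "pw w = p \<circ> sw i" "length w = ninv (p \<circ> sw i)"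
      using less.hyps[OF _ p'p] dec by auto
    have "pw (w@[i]) = p" using w(2) by (simp add: pw_snoc comp_assoc)
    then show ?thesis using w ir dec by (intro exI[of _ "w@[i]"]) auto
  qed
qed

lemma exists_red: "\<exists>v. invred v \<and> pw v = pw w"
proof -
  obtain K where "pw w permutes {0..K}" using pw_permutes0 by blast
  then obtain v where "pw v = pw w" "length v = ninv (pw w)" using bubble by blast
  then have "invred v \<and> pw v = pw w" by (simp add: invred_def)
  then show ?thesis by blast
qed

lemma R_char: "reduced_words n p = {w. set w \<subseteq> {1..n} \<and> pw w = p \<and> invred w}"
proof (intro set_eqI iffI)
  fix w assume w: "w \<in> reduced_words n p"
  then have s: "set w \<subseteq> {1..n}" "pw w = p" by (auto simp: reduced_words_def)
  then have "set w \<subseteq> {1..<Suc n}" by auto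
  then have "p permutes {1..Suc n}" using pw_permutes[of w 1 "Suc n"] s by auto
  then obtain w0 where w0: "set w0 \<subseteq> {1..<Suc n}" "pw w0 = p" "length w0 = ninv p"
    using bubble by blast
  have "set w0 \<subseteq> {1..n}" using w0(1) by auto
  then have "length w \<le> length w0" using w w0(2) by (auto simp: reduced_words_def)
  then have "invred w" using ninv_le[of w] w0 s by (simp add: invred_def)
  then show "w \<in> {w. set w \<subseteq> {1..n} \<and> pw w = p \<and> invred w}" using s by simp
next
  fix w assume "w \<in> {w. set w \<subseteq> {1..n} \<and> pw w = p \<and> invred w}"
  then show "w \<in> reduced_words n p"
    using ninv_le by (auto simp: reduced_words_def invred_def) (metis)
qed



definition Lf :: "nat \<Rightarrow> nat list \<Rightarrow> nat list" where "Lf m u = filter (\<lambda>x. x \<le> m) u"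
definition Rf :: "nat \<Rightarrow> nat list \<Rightarrow> nat list" where "Rf m u = filter (\<lambda>x. \<not> x \<le> m) u"
definition Wp :: "nat \<Rightarrow> nat list \<Rightarrow> bool" where
  "Wp m u \<longleftrightarrow> invred (Lf m u) \<and> invred (Rf m u)"
definition sameP :: "nat \<Rightarrow> nat list \<Rightarrow> nat list \<Rightarrow> bool" where
  "sameP m u v \<longleftrightarrow> pw (Lf m u) = pw (Lf m v) \<and> pw (Rf m u) = pw (Rf m v)"

lemma sameP_refl: "sameP m u u" by (simp add: sameP_def)
lemma sameP_sym: "sameP m u v \<Longrightarrow> sameP m v u" by (simp add: sameP_def)
lemma sameP_trans: "sameP m u v \<Longrightarrow> sameP m v w \<Longrightarrow> sameP m u w" by (simp add: sameP_def)

lemma pw_app_apply: "pw (w @ v) x = pw w (pw v x)" by (simp add: pw_append)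

lemma wp_append:
  assumes "Wp m w" "sameP m w w0" "Wp m (w0@[i])"
  shows "Wp m (w@[i]) \<and> sameP m (w@[i]) (w0@[i])"
  using assms by (cases "i \<le> m") (auto simp: Wp_def sameP_def Lf_def Rf_def invred_snoc pw_snoc)

lemma wp_prefix: "Wp m (w@v) \<Longrightarrow> Wp m w"
  by (auto simp: Wp_def Lf_def Rf_def intro: invred_prefix)

lemma invred_eq: "pw u = pw v \<Longrightarrow> length u = length v \<Longrightarrow> invred u = invred v"
  by (simp add: invred_def)

lemma sw_comm: "Suc i < j \<or> Suc j < i \<Longrightarrow> sw i (sw j x) = sw j (sw i x)"
  by (auto simp: transpose_def)
lemma sw_braid: "Suc i = j \<or> Suc j = i \<Longrightarrow> sw i (sw j (sw i x)) = sw j (sw i (sw j x))"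
  by (auto simp: transpose_def)

lemma wp_filter_eq:
  assumes "\<And>Q. pw (filter Q xs) = pw (filter Q ys) \<and> length (filter Q xs) = length (filter Q ys)"
    and "Wp m (v@xs)"
  shows "Wp m (v@ys) \<and> sameP m (v@xs) (v@ys)"
proof -
  have "pw (filter Q (v@xs)) = pw (filter Q (v@ys)) \<and> length (filter Q (v@xs)) = length (filter Q (v@ys))" for Q
    using assms(1)[of Q] by (simp add: pw_append)
  then show ?thesis using assms(2) unfolding Wp_def sameP_def Lf_def Rf_def by (metis invred_eq)
qed

lemma wp_swap:
  assumes "Suc i < j \<or> Suc j < i" "Wp m (v@[i,j])"
  shows "Wp m (v@[j,i]) \<and> sameP m (v@[i,j]) (v@[j,i])"
proof (rule wp_filter_eq[OF _ assms(2)])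
  fix Q
  show "pw (filter Q [i,j]) = pw (filter Q [j,i]) \<and> length (filter Q [i,j]) = length (filter Q [j,i])"
    using sw_comm[OF assms(1)] by (auto simp: fun_eq_iff)
qed

lemma wp_braid:
  assumes "Suc i = j \<or> Suc j = i" "(i \<le> m) = (j \<le> m)" "Wp m (v@[i,j,i])"
  shows "Wp m (v@[j,i,j]) \<and> sameP m (v@[i,j,i]) (v@[j,i,j])"
proof -
  have "pw (filter Q (v@[i,j,i])) = pw (filter Q (v@[j,i,j])) \<and>
        length (filter Q (v@[i,j,i])) = length (filter Q (v@[j,i,j]))" if "Q = (\<lambda>x. x \<le> m) \<or> Q = (\<lambda>x. \<not> x \<le> m)" for Q
    using that sw_braid[OF assms(1)] assms(2) by (auto simp: fun_eq_iff pw_append)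
  then show ?thesis using assms(3) unfolding Wp_def sameP_def Lf_def Rf_def by (metis invred_eq)
qed

lemma not_invred_ii: "\<not> invred (x@[i,i])"
proof
  assume "invred (x@[i,i])"
  then have a: "invred ((x@[i])@[i])" by simp
  then have "pw (x@[i]) i < pw (x@[i]) (Suc i)" "pw x i < pw x (Suc i)"
    using invred_snoc[of "x@[i]" i] invred_snoc[of x i] by auto
  then show False by (simp add: pw_snoc)
qed

lemma wp_ii: "\<not> Wp m (v@[i,i])"
  using not_invred_ii by (cases "i \<le> m") (auto simp: Wp_def Lf_def Rf_def)

lemma wp_cross: "(i \<le> m) \<noteq> (j \<le> m) \<Longrightarrow> \<not> Wp m (v@[i,j,i])"
  using not_invred_ii by (cases "i \<le> m") (auto simp: Wp_def Lf_def Rf_def)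

lemma desc_of: "invred (w@[i]) \<Longrightarrow> pw (w@[i]) (Suc i) < pw (w@[i]) i"
  by (simp add: invred_snoc pw_snoc)



lemma main_claim:
  "length u = k \<Longrightarrow> Wp m u \<Longrightarrow>
     invred u \<and> (\<forall>u'. invred u' \<and> pw u' = pw u \<longrightarrow> Wp m u' \<and> sameP m u u')"
proof (induction k arbitrary: u)
  case 0
  then have u: "u = []" by simp
  have H: "Wp m u' \<and> sameP m u u'" if "invred u'" "pw u' = pw u" for u'
  proof -
    have "length u' = 0" using that u by (simp add: invred_def)
    then show ?thesis using u by (simp add: Wp_def sameP_def Lf_def Rf_def)
  qed
  have "invred u" using u by simp
  moreover have "\<forall>u'. invred u' \<and> pw u' = pw u \<longrightarrow> Wp m u' \<and> sameP m u u'"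
    using H by (intro allI impI) (erule conjE, rule H)
  ultimately show ?case by (rule conjI)
next
  case (Suc k)
  obtain u0 i where u: "u = u0 @ [i]" using Suc.prems(1) by (metis length_Suc_conv_rev)
  have lu0: "length u0 = k" using u Suc.prems(1) by simp
  have W0: "Wp m u0" using Suc.prems(2) u wp_prefix by blast
  have I0: "invred u0" and B0: "\<And>u'. invred u' \<Longrightarrow> pw u' = pw u0 \<Longrightarrow> Wp m u' \<and> sameP m u0 u'"
    using Suc.IH[OF lu0 W0] by auto
  have Wu: "Wp m (u0@[i])" using Suc.prems(2) u by simp
  have A: "invred u"
  proof (rule ccontr)
    assume na: "\<not> invred u"
    then have "\<not> pw u0 i < pw u0 (Suc i)" using I0 u invred_snoc by blast
    then have lt: "pw u0 (Suc i) < pw u0 i" using pw_ne[of u0 i] by linarith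
    obtain v where v: "invred v" "pw v = pw u" using exists_red by blast
    have "invred (v@[i])" using v lt by (simp add: invred_snoc u pw_snoc)
    moreover have "pw (v@[i]) = pw u0" using v by (simp add: u pw_snoc fun_eq_iff)
    ultimately have "Wp m (v@[i]) \<and> sameP m u0 (v@[i])" using B0 by blast
    then have "Wp m ((v@[i])@[i])" using wp_append[OF _ _ Wu] sameP_sym by blast
    then show False using wp_ii by simp
  qed
  have B: "Wp m u' \<and> sameP m u u'" if u': "invred u'" "pw u' = pw u" for u'
  proof -
    have "length u' = length u" using invred_len[OF u'(1) A u'(2)] .
    then obtain u0' j where u'eq: "u' = u0' @ [j]" using u by (metis length_Suc_conv_rev length_append_singleton)
    define \<tau> where "\<tau> = pw u"
    have I0': "invred u0'" using u' u'eq invred_prefix by blast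
    have di: "\<tau> (Suc i) < \<tau> i" using desc_of A u \<tau>_def by blast
    have dj: "\<tau> (Suc j) < \<tau> j" using desc_of u' u'eq \<tau>_def by metis
    have pu0: "pw u0 x = \<tau> (sw i x)" for x unfolding \<tau>_def u by (simp add: pw_snoc)
    have pu0': "pw u0' x = \<tau> (sw j x)" for x unfolding \<tau>_def u'(2)[symmetric] u'eq by (simp add: pw_snoc)
    show ?thesis
    proof (cases "i = j")
      case True
      have "pw u0' = pw u0" using pu0 pu0' True by (simp add: fun_eq_iff)
      then have "Wp m u0' \<and> sameP m u0 u0'" using B0 I0' by blast
      then have "Wp m (u0'@[i]) \<and> sameP m (u0'@[i]) (u0@[i])" using wp_append[OF _ _ Wu] sameP_sym by blast
      then show ?thesis using True u u'eq sameP_sym by blast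
    next
      case False
      show ?thesis
      proof (cases "Suc i < j \<or> Suc j < i")
        case comm: True
        have e: "pw (u@[i,j]) x = \<tau> (sw i (sw j x))" for x by (simp add: \<tau>_def pw_append)
        obtain v where v: "invred v" "\<And>x. pw v x = \<tau> (sw i (sw j x))"
          using exists_red[of "u@[i,j]"] e by metis
        have "invred (v@[j])" using v comm dj by (auto simp: invred_snoc transpose_def)
        moreover have "pw (v@[j]) = pw u0" using v pu0 by (simp add: pw_snoc fun_eq_iff)
        ultimately have 1: "Wp m (v@[j]) \<and> sameP m u0 (v@[j])" using B0 by blast
        have lvj: "length (v@[j]) = k" using lu0 invred_len[OF \<open>invred (v@[j])\<close> I0 \<open>pw (v@[j]) = pw u0\<close>] by simp
        have "Wp m ((v@[j])@[i]) \<and> sameP m ((v@[j])@[i]) (u0@[i])"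
          using wp_append[OF _ _ Wu] 1 sameP_sym by blast
        then have 2: "Wp m (v@[j,i]) \<and> sameP m (v@[j,i]) u" using u by simp
        have comm': "Suc j < i \<or> Suc i < j" using comm by blast
        have 3: "Wp m (v@[i,j]) \<and> sameP m (v@[j,i]) (v@[i,j])"
          using wp_swap[OF comm' conjunct1[OF 2]] .
        have "Wp m ((v@[i])@[j])" using 3 by simp
        then have Wvi: "Wp m (v@[i])" by (rule wp_prefix)
        have pweq: "pw u0' = pw (v@[i])"
        proof
          fix x
          have "pw (v@[i]) x = \<tau> (sw i (sw j (sw i x)))" by (simp add: pw_snoc v)
          also have "\<dots> = \<tau> (sw j x)" using sw_comm[OF comm, of "sw i x"] by simp
          finally show "pw u0' x = pw (v@[i]) x" using pu0' by simp
        qed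
        have lvi: "length (v@[i]) = k" using lvj by simp
        have IHv: "\<forall>u'. invred u' \<and> pw u' = pw (v@[i]) \<longrightarrow> Wp m u' \<and> sameP m (v@[i]) u'"
          using Suc.IH[OF lvi Wvi] by (rule conjunct2)
        have 4: "Wp m u0' \<and> sameP m (v@[i]) u0'"
          using IHv I0' pweq by blast
        have W3: "Wp m ((v@[i])@[j])" using 3 by simp
        have 5: "Wp m (u0'@[j]) \<and> sameP m (u0'@[j]) ((v@[i])@[j])"
          using wp_append[OF conjunct1[OF 4] sameP_sym[OF conjunct2[OF 4]] W3] .
        have s1: "sameP m u (v@[j,i])" using 2 sameP_sym by blast
        have s2: "sameP m (v@[j,i]) (v@[i,j])" using 3 by blast
        have s3: "sameP m (v@[i,j]) (u0'@[j])" using 5 sameP_sym by simp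
        have "sameP m u u'" using sameP_trans[OF sameP_trans[OF s1 s2] s3] u'eq by simp
        then show ?thesis using 5 u'eq by simp
      next
        case br: False
        then have adj: "Suc i = j \<or> Suc j = i" using False by linarith
        have e: "pw (u@[i,j,i]) x = \<tau> (sw i (sw j (sw i x)))" for x by (simp add: \<tau>_def pw_append)
        obtain v where v: "invred v" "\<And>x. pw v x = \<tau> (sw i (sw j (sw i x)))"
          using exists_red[of "u@[i,j,i]"] e by metis
        have iv1: "invred (v@[i])" using v adj di dj by (auto simp: invred_snoc transpose_def)
        have iv2: "invred (v@[i,j])" using iv1 v adj di dj
          using invred_snoc[of "v@[i]" j] by (auto simp: pw_snoc transpose_def)
        have pvij: "pw (v@[i,j]) = pw u0"
        proof
          fix x
          show "pw (v@[i,j]) x = pw u0 x" using pu0 v by (simp add: pw_append)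
        qed
        have 1: "Wp m (v@[i,j]) \<and> sameP m u0 (v@[i,j])" using B0[OF iv2 pvij] .
        have lvij: "length (v@[i,j]) = k" using lu0 invred_len[OF iv2 I0 pvij] by simp
        have "Wp m ((v@[i,j])@[i]) \<and> sameP m ((v@[i,j])@[i]) (u0@[i])"
          using wp_append[OF conjunct1[OF 1] sameP_sym[OF conjunct2[OF 1]] Wu] .
        then have 2: "Wp m (v@[i,j,i]) \<and> sameP m (v@[i,j,i]) u" using u by simp
        show ?thesis
        proof (cases "(i \<le> m) = (j \<le> m)")
          case False
          then show ?thesis using wp_cross 2 by blast
        next
          case True
          have 3: "Wp m (v@[j,i,j]) \<and> sameP m (v@[i,j,i]) (v@[j,i,j])"
            using wp_braid[OF adj True conjunct1[OF 2]] .
          have "Wp m ((v@[j,i])@[j])" using 3 by simp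
          then have Wvji: "Wp m (v@[j,i])" by (rule wp_prefix)
          have pweq: "pw u0' = pw (v@[j,i])"
          proof
            fix x
            have "pw (v@[j,i]) x = \<tau> (sw i (sw j (sw i (sw j (sw i x)))))" by (simp add: pw_append v)
            also have "\<dots> = \<tau> (sw j (sw i (sw j (sw j (sw i x)))))" using sw_braid[OF adj, of "sw j (sw i x)"] by simp
            also have "\<dots> = \<tau> (sw j x)" by simp
            finally show "pw u0' x = pw (v@[j,i]) x" using pu0' by simp
          qed
          have lvji: "length (v@[j,i]) = k" using lvij by simp
          have IHv: "\<forall>u'. invred u' \<and> pw u' = pw (v@[j,i]) \<longrightarrow> Wp m u' \<and> sameP m (v@[j,i]) u'"
            using Suc.IH[OF lvji Wvji] by (rule conjunct2)
          have 4: "Wp m u0' \<and> sameP m (v@[j,i]) u0'"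
            using IHv I0' pweq by blast
          have W3: "Wp m ((v@[j,i])@[j])" using 3 by simp
          have 5: "Wp m (u0'@[j]) \<and> sameP m (u0'@[j]) ((v@[j,i])@[j])"
            using wp_append[OF conjunct1[OF 4] sameP_sym[OF conjunct2[OF 4]] W3] .
          have s1: "sameP m u (v@[i,j,i])" using 2 sameP_sym by blast
          have s2: "sameP m (v@[i,j,i]) (v@[j,i,j])" using 3 by blast
          have s3: "sameP m (v@[j,i,j]) (u0'@[j])" using 5 sameP_sym by simp
          have "sameP m u u'" using sameP_trans[OF sameP_trans[OF s1 s2] s3] u'eq by simp
          then show ?thesis using 5 u'eq by simp
        qed
      qed
    qed
  qed
  show ?case using A B by blast
qed



lemma shift_Cons[simp]: "shift (x#b) m = (x+m) # shift b m" by (simp add: shift_def)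
lemma shift_Nil[simp]: "shift [] m = []" by (simp add: shift_def)
lemma shift_append[simp]: "shift (a@b) m = shift a m @ shift b m" by (simp add: shift_def)
lemma set_shift: "set (shift b m) = (\<lambda>x. x + m) ` set b" by (simp add: shift_def)

lemma sw_shift: "sw (x+m) (y+m) = sw x y + m"
  by (auto simp: transpose_def)

lemma pw_shift: "set b \<subseteq> {1..} \<Longrightarrow> pw (shift b m) q = (if q \<le> m then q else pw b (q - m) + m)"
proof (induction b arbitrary: q)
  case Nil then show ?case by simp
next
  case (Cons x b)
  then have x: "x \<ge> 1" and IH: "\<And>q. pw (shift b m) q = (if q \<le> m then q else pw b (q - m) + m)" by auto
  show ?case
  proof (cases "q \<le> m")
    case True then show ?thesis using IH x by (simp add: transpose_def)
  next
    case False then show ?thesis using IH sw_shift[of x m "pw b (q-m)"] by simp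
  qed
qed

lemma invred_shift: "set b \<subseteq> {1..} \<Longrightarrow> invred (shift b m) \<longleftrightarrow> invred b"
proof (induction b rule: rev_induct)
  case Nil then show ?case by simp
next
  case (snoc x b)
  then have x: "x \<ge> 1" and sb: "set b \<subseteq> {1..}" by auto
  have "pw (shift b m) (x+m) = pw b x + m" "pw (shift b m) (Suc (x+m)) = pw b (Suc x) + m"
    using pw_shift[OF sb, of m] x by auto
  then show ?case using snoc sb by (simp add: invred_snoc)
qed

lemma pw_zero: "set b \<subseteq> {1..} \<Longrightarrow> pw b 0 = 0"
proof -
  assume "set b \<subseteq> {1..}"
  moreover obtain K where "\<forall>n\<in>set b. n < K"
    using finite_nat_set_iff_bounded[of "set b"] by auto
  ultimately have "set b \<subseteq> {1..<K}" by auto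
  then have "pw b permutes {1..K}" by (rule pw_permutes)
  then show ?thesis by (simp add: permutes_not_in)
qed

lemma pw_shift_inj:
  assumes "set b \<subseteq> {1..}" "set b' \<subseteq> {1..}" "pw (shift b m) = pw (shift b' m)"
  shows "pw b = pw b'"
proof
  fix q
  show "pw b q = pw b' q"
  proof (cases "q = 0")
    case True then show ?thesis using pw_zero assms by simp
  next
    case False
    have "pw (shift b m) (q+m) = pw (shift b' m) (q+m)" using assms(3) by simp
    then show ?thesis using pw_shift[OF assms(1)] pw_shift[OF assms(2)] False by simp
  qed
qed

definition unsh :: "nat \<Rightarrow> nat list \<Rightarrow> nat list" where "unsh m X = map (\<lambda>x. x - m) X"

lemma shift_unsh: "\<forall>x\<in>set X. m < x \<Longrightarrow> shift (unsh m X) m = X"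
  by (induction X) (auto simp: unsh_def)
lemma unsh_shift[simp]: "unsh m (shift b m) = b"
  by (induction b) (auto simp: unsh_def)
lemma set_Rf: "x \<in> set (Rf m u) \<Longrightarrow> m < x" by (auto simp: Rf_def)

lemma count_image_Cons:
  "count (image_mset (Cons x) M) u = (case u of [] \<Rightarrow> 0 | y#u' \<Rightarrow> if y = x then count M u' else 0)"
proof (cases u)
  case Nil
  then have "Cons x -` {u} = {}" by auto
  then show ?thesis using Nil by (simp add: count_image_mset)
next
  case (Cons y u')
  show ?thesis
  proof (cases "y = x")
    case True
    have "Cons x -` {u} \<inter> set_mset M \<subseteq> {u'}" using Cons True by auto
    then have "(\<Sum>z\<in>Cons x -` {u} \<inter> set_mset M. count M z) = (\<Sum>z\<in>{u'}. count M z)"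
      by (intro sum.mono_neutral_left) (auto simp: Cons True)
    then show ?thesis using Cons True by (simp add: count_image_mset)
  next
    case False
    then have "Cons x -` {u} = {}" using Cons by auto
    then show ?thesis using Cons False by (simp add: count_image_mset)
  qed
qed

lemma count_shuffle:
  "\<forall>x\<in>set a. P x \<Longrightarrow> \<forall>x\<in>set c. \<not> P x \<Longrightarrow>
   count (shuffle a c) u = (if filter P u = a \<and> filter (\<lambda>x. \<not> P x) u = c then 1 else 0)"
proof (induction a c arbitrary: u rule: shuffle.induct)
  case (1 w)
  have "filter P u = [] \<and> filter (\<lambda>x. \<not> P x) u = w \<longleftrightarrow> u = w"
  proof
    assume a: "filter P u = [] \<and> filter (\<lambda>x. \<not> P x) u = w"
    then have "\<forall>x\<in>set u. \<not> P x" by (metis filter_empty_conv)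
    then show "u = w" using a by simp
  next
    assume "u = w" then show "filter P u = [] \<and> filter (\<lambda>x. \<not> P x) u = w" using 1 by (simp add: filter_empty_conv)
  qed
  then show ?case by auto
next
  case (2 v va)
  have "filter P u = v # va \<and> filter (\<lambda>x. \<not> P x) u = [] \<longleftrightarrow> u = v # va"
  proof
    assume a: "filter P u = v # va \<and> filter (\<lambda>x. \<not> P x) u = []"
    then have "\<forall>x\<in>set u. P x" by (metis (mono_tags) filter_empty_conv)
    then show "u = v # va" using a by simp
  next
    assume "u = v # va" then show "filter P u = v # va \<and> filter (\<lambda>x. \<not> P x) u = []" using 2 by (simp add: filter_empty_conv)
  qed
  then show ?case by auto
next
  case (3 a v b w)
  have Pa: "P a" and Pb: "\<not> P b" using 3(3,4) by auto
  show ?case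
  proof (cases u)
    case Nil then show ?thesis by (simp add: count_image_Cons)
  next
    case (Cons z u')
    have IH1: "count (shuffle v (b#w)) u' = (if filter P u' = v \<and> filter (\<lambda>x. \<not> P x) u' = b#w then 1 else 0)"
      using 3(1)[of u'] 3(3,4) by auto
    have IH2: "count (shuffle (a#v) w) u' = (if filter P u' = a#v \<and> filter (\<lambda>x. \<not> P x) u' = w then 1 else 0)"
      using 3(2)[of u'] 3(3,4) by auto
    show ?thesis
    proof (cases "z = a")
      case True
      then show ?thesis using Cons Pa Pb IH1 by (auto simp: count_image_Cons)
    next
      case za: False
      show ?thesis
      proof (cases "z = b")
        case True
        then show ?thesis using Cons Pa Pb IH2 za by (auto simp: count_image_Cons)
      next
        case False
        then show ?thesis using Cons za by (auto simp: count_image_Cons)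
      qed
    qed
  qed
qed



section \<open>Linear algebra\<close>

lemma span_zero: "(\<lambda>t. 0) \<in> lin_span G"
  unfolding lin_span_def by (rule CollectI, rule exI[of _ "{}"]) simp

lemma span_gen: "g \<in> G \<Longrightarrow> g \<in> lin_span G"
  unfolding lin_span_def by (rule CollectI, rule exI[of _ "{g}"], rule exI[of _ "\<lambda>_. 1"]) simp

lemma span_smult: "x \<in> lin_span G \<Longrightarrow> (\<lambda>t. c * x t) \<in> lin_span G"
proof -
  assume "x \<in> lin_span G"
  then obtain A d where A: "finite A" "A \<subseteq> G" "x = (\<lambda>t. \<Sum>g\<in>A. d g * g t)"
    unfolding lin_span_def by blast
  have "(\<lambda>t. c * x t) = (\<lambda>t. \<Sum>g\<in>A. (c * d g) * g t)"
    using A(3) by (simp add: sum_distrib_left mult.assoc)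
  then show ?thesis using A unfolding lin_span_def
    by (intro CollectI exI[of _ A] exI[of _ "\<lambda>g. c * d g"]) simp
qed

lemma span_add: "x \<in> lin_span G \<Longrightarrow> y \<in> lin_span G \<Longrightarrow> (\<lambda>t. x t + y t) \<in> lin_span G"
proof -
  assume "x \<in> lin_span G" "y \<in> lin_span G"
  then obtain A c B d where A: "finite A" "A \<subseteq> G" "x = (\<lambda>t. \<Sum>g\<in>A. c g * g t)"
    and B: "finite B" "B \<subseteq> G" "y = (\<lambda>t. \<Sum>g\<in>B. d g * g t)"
    unfolding lin_span_def by blast
  define e where "e g = (if g \<in> A then c g else 0) + (if g \<in> B then d g else 0)" for g
  have "(\<Sum>g\<in>A \<union> B. e g * g t) = x t + y t" for t
  proof -
    have pt: "e g * g t = (if g \<in> A then c g * g t else 0) + (if g \<in> B then d g * g t else 0)" for g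
      unfolding e_def by (simp add: distrib_right)
    have "(\<Sum>g\<in>A \<union> B. e g * g t) = (\<Sum>g\<in>A \<union> B. (if g \<in> A then c g * g t else 0)) + (\<Sum>g\<in>A \<union> B. (if g \<in> B then d g * g t else 0))"
      unfolding pt by (rule sum.distrib)
    also have "\<dots> = (\<Sum>g\<in>(A \<union> B) \<inter> A. c g * g t) + (\<Sum>g\<in>(A \<union> B) \<inter> B. d g * g t)"
      using A(1) B(1) by (simp only: sum.inter_restrict finite_Un)
    also have "\<dots> = x t + y t" using A(3) B(3) by (simp only: Int_absorb1 Un_upper1 Un_upper2)
    finally show ?thesis .
  qed
  then have "(\<lambda>t. x t + y t) = (\<lambda>t. \<Sum>g\<in>A \<union> B. e g * g t)" by simp
  then show ?thesis using A B unfolding lin_span_def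
    by (intro CollectI exI[of _ "A \<union> B"] exI[of _ e]) simp
qed

lemma span_sum: "finite I \<Longrightarrow> (\<And>i. i \<in> I \<Longrightarrow> f i \<in> lin_span G) \<Longrightarrow>
   (\<lambda>t. \<Sum>i\<in>I. c i * f i t) \<in> lin_span G"
proof (induction I rule: finite_induct)
  case empty then show ?case by (simp add: span_zero)
next
  case (insert i I)
  have "(\<lambda>t. \<Sum>j\<in>insert i I. c j * f j t) = (\<lambda>t. c i * f i t + (\<Sum>j\<in>I. c j * f j t))"
    using insert by simp
  moreover have "(\<lambda>t. c i * f i t) \<in> lin_span G" using insert by (simp add: span_smult)
  ultimately show ?case using insert span_add[of "\<lambda>t. c i * f i t" G "\<lambda>t. \<Sum>j\<in>I. c j * f j t"] by simp
qed

lemma span_mono: "G \<subseteq> H \<Longrightarrow> lin_span G \<subseteq> lin_span H"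
  unfolding lin_span_def by blast

definition lift :: "('b \<Rightarrow> 'c \<Rightarrow> 'k::field) \<Rightarrow> ('b \<Rightarrow> 'k) \<Rightarrow> 'c \<Rightarrow> 'k" where
  "lift K x = (\<lambda>t. \<Sum>b\<in>supp x. x b * K b t)"

lemma lift_eq: "finite S \<Longrightarrow> supp x \<subseteq> S \<Longrightarrow> lift K x t = (\<Sum>b\<in>S. x b * K b t)"
  unfolding lift_def by (rule sum.mono_neutral_left) (auto simp: supp_def)

lemma supp_comb: "supp (\<lambda>t. \<Sum>g\<in>A. (c g :: 'k::field) * g t) \<subseteq> (\<Union>g\<in>A. supp g)"
proof
  fix b assume "b \<in> supp (\<lambda>t. \<Sum>g\<in>A. c g * g t)"
  then have "(\<Sum>g\<in>A. c g * g b) \<noteq> 0" by (simp add: supp_def)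
  then obtain g where "g \<in> A" "c g * g b \<noteq> 0" by (meson sum.neutral)
  then have "g b \<noteq> 0" by auto
  then show "b \<in> (\<Union>g\<in>A. supp g)" using \<open>g \<in> A\<close> by (auto simp: supp_def)
qed

lemma finite_supp_comb: "finite A \<Longrightarrow> (\<And>g. g \<in> A \<Longrightarrow> finite (supp g)) \<Longrightarrow> finite (supp (\<lambda>t. \<Sum>g\<in>A. (c g :: 'k::field) * g t))"
proof -
  assume "finite A" "\<And>g. g \<in> A \<Longrightarrow> finite (supp g)"
  then have "finite (\<Union>g\<in>A. supp g)" by blast
  then show ?thesis using supp_comb by (rule finite_subset[rotated])
qed

lemma lift_lin:
  assumes "finite A" "\<And>g. g \<in> A \<Longrightarrow> finite (supp g)"
  shows "lift K (\<lambda>t. \<Sum>g\<in>A. c g * g t) = (\<lambda>t. \<Sum>g\<in>A. c g * lift K g t)"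
proof
  fix t
  define S where "S = (\<Union>g\<in>A. supp g)"
  have fS: "finite S" using assms by (simp add: S_def)
  have "lift K (\<lambda>t. \<Sum>g\<in>A. c g * g t) t = (\<Sum>b\<in>S. (\<Sum>g\<in>A. c g * g b) * K b t)"
    by (rule lift_eq[OF fS]) (unfold S_def, rule supp_comb)
  also have "\<dots> = (\<Sum>b\<in>S. \<Sum>g\<in>A. c g * (g b * K b t))"
    by (simp add: sum_distrib_right mult.assoc)
  also have "\<dots> = (\<Sum>g\<in>A. c g * (\<Sum>b\<in>S. g b * K b t))"
    by (simp add: sum.swap[of _ S] sum_distrib_left)
  also have "\<dots> = (\<Sum>g\<in>A. c g * lift K g t)"
  proof (rule sum.cong[OF refl])
    fix g assume "g \<in> A"
    then have "supp g \<subseteq> S" by (auto simp: S_def)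
    then show "c g * (\<Sum>b\<in>S. g b * K b t) = c g * lift K g t" using lift_eq[OF fS, of g K t] by simp
  qed
  finally show "lift K (\<lambda>t. \<Sum>g\<in>A. c g * g t) t = (\<Sum>g\<in>A. c g * lift K g t)" .
qed

lemma Delta_lift: "Delta x = lift delta_basis x"
  by (simp add: Delta_def lift_def)

lemma nabla_lift1: "nabla x y = lift (\<lambda>b1 t. lift (nabla_basis b1) y t) x"
  by (simp add: nabla_def lift_def sum_distrib_left mult.assoc mult.left_commute)

lemma nabla_lift2: "nabla x y = lift (\<lambda>b2 t. \<Sum>b1\<in>supp x. x b1 * nabla_basis b1 b2 t) y"
  unfolding nabla_def lift_def
  by (rule ext) (simp add: sum_distrib_left sum.swap[of _ "supp x"] mult.assoc mult.left_commute)



abbreviation R :: "nat \<Rightarrow> (nat \<Rightarrow> nat) \<Rightarrow> nat list set" where "R \<equiv> reduced_words"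

lemma R_iff: "w \<in> R n p \<longleftrightarrow> set w \<subseteq> {1..n} \<and> pw w = p \<and> invred w"
  using R_char by blast

lemma finite_R: "finite (R n p)"
proof -
  have "R n p \<subseteq> {w. set w \<subseteq> {1..n} \<and> length w = ninv p}"
  proof
    fix w assume "w \<in> R n p"
    then have "set w \<subseteq> {1..n}" "pw w = p" "invred w" by (simp_all add: R_iff)
    then show "w \<in> {w. set w \<subseteq> {1..n} \<and> length w = ninv p}" by (simp add: invred_def)
  qed
  then show ?thesis by (rule finite_subset) (rule finite_lists_length_eq, simp)
qed

lemma pv_eval: "(perm_vec n p :: 'k::field vec) (w,k) = (if k = n \<and> w \<in> R n p then 1 else 0)"
proof -
  have "(perm_vec n p :: 'k vec) (w,k) = (\<Sum>w'\<in>R n p. if w' = w then (if k = n then 1 else 0) else 0)"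
    unfolding perm_vec_def by (rule sum.cong) (auto simp: bvec_def)
  also have "\<dots> = (if w \<in> R n p then (if k = n then 1 else 0) else 0)"
    by (simp add: sum.delta[OF finite_R])
  finally show ?thesis by auto
qed

lemma supp_pv: "supp (perm_vec n p :: 'k::field vec) = (\<lambda>w. (w,n)) ` R n p"
  by (auto simp: supp_def pv_eval split: if_splits)

lemma finite_supp_pv: "finite (supp (perm_vec n p :: 'k::field vec))"
  by (simp add: supp_pv finite_R)

lemma sum_supp_pv: "(\<Sum>b\<in>supp (perm_vec n p :: 'k::field vec). f b) = (\<Sum>w\<in>R n p. f (w,n))"
  unfolding supp_pv by (subst sum.reindex) (auto simp: inj_on_def)

section \<open>Product of generators\<close>

definition Wset :: "nat \<Rightarrow> nat \<Rightarrow> (nat \<Rightarrow> nat) \<Rightarrow> (nat \<Rightarrow> nat) \<Rightarrow> nat list set" where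
  "Wset m n \<pi> \<sigma> = {u. Lf m u \<in> R m \<pi> \<and> unsh m (Rf m u) \<in> R n \<sigma>}"

lemma nabla_pv:
  "nabla (perm_vec m \<pi> :: 'k::field vec) (perm_vec n \<sigma>) (u,k) = (if k = m+n \<and> u \<in> Wset m n \<pi> \<sigma> then 1 else 0)"
proof -
  have nb: "(nabla_basis (a,m) (b,n) (u,k) :: 'k) =
      (if a = Lf m u then (if b = unsh m (Rf m u) then (if k = m+n then 1 else 0) else 0) else 0)"
    if a: "a \<in> R m \<pi>" and b: "b \<in> R n \<sigma>" for a b
  proof -
    have la: "\<forall>x\<in>set a. x \<le> m" using a by (auto simp: R_iff)
    have lb: "\<forall>x\<in>set (shift b m). \<not> x \<le> m" using b by (auto simp: R_iff set_shift)
    have c: "count (shuffle a (shift b m)) u = (if Lf m u = a \<and> Rf m u = shift b m then 1 else 0)"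
      using count_shuffle[OF la lb] by (simp add: Lf_def Rf_def)
    have "Rf m u = shift b m \<longleftrightarrow> b = unsh m (Rf m u)"
      using shift_unsh[of "Rf m u" m] set_Rf by auto
    then show ?thesis using c by (auto simp: nabla_basis_def)
  qed
  have "nabla (perm_vec m \<pi> :: 'k::field vec) (perm_vec n \<sigma>) (u,k) =
        (\<Sum>a\<in>R m \<pi>. \<Sum>b\<in>R n \<sigma>. (nabla_basis (a,m) (b,n) (u,k) :: 'k))"
    unfolding nabla_def by (simp add: sum_supp_pv pv_eval)
  also have "\<dots> = (\<Sum>a\<in>R m \<pi>. \<Sum>b\<in>R n \<sigma>. (if a = Lf m u then (if b = unsh m (Rf m u) then (if k = m+n then 1 else 0) else 0) else 0))"
    by (intro sum.cong refl) (simp add: nb)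
  also have "\<dots> = (\<Sum>a\<in>R m \<pi>. (if a = Lf m u then (if unsh m (Rf m u) \<in> R n \<sigma> then (if k = m+n then 1 else 0) else 0) else 0))"
    by (intro sum.cong refl) (simp add: sum.delta[OF finite_R])
  also have "\<dots> = (if Lf m u \<in> R m \<pi> then (if unsh m (Rf m u) \<in> R n \<sigma> then (if k = m+n then 1 else 0) else 0) else 0)"
    by (simp add: sum.delta[OF finite_R])
  finally show ?thesis by (auto simp: Wset_def)
qed

lemma set_Lf_Rf: "set u = set (Lf m u) \<union> set (Rf m u)"
  by (auto simp: Lf_def Rf_def)

lemma Wset_letters: assumes "u \<in> Wset m n \<pi> \<sigma>" shows "set u \<subseteq> {1..m+n}"
proof
  fix x assume x: "x \<in> set u"
  show "x \<in> {1..m+n}"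
  proof (cases "x \<le> m")
    case True
    then have "x \<in> set (Lf m u)" using x by (simp add: Lf_def)
    then show ?thesis using assms by (auto simp: Wset_def R_iff)
  next
    case False
    then have "x \<in> set (Rf m u)" using x by (simp add: Rf_def)
    then have "x - m \<in> set (unsh m (Rf m u))" by (simp add: unsh_def)
    then have "x - m \<in> {1..n}" using assms by (auto simp: Wset_def R_iff)
    then show ?thesis using False by auto
  qed
qed

lemma Wset_Wp: assumes "u \<in> Wset m n \<pi> \<sigma>" shows "Wp m u"
proof -
  have l: "invred (Lf m u)" using assms by (simp add: Wset_def R_iff)
  have r: "invred (unsh m (Rf m u))" and s: "set (unsh m (Rf m u)) \<subseteq> {1..n}"
    using assms by (simp_all add: Wset_def R_iff)
  have s1: "set (unsh m (Rf m u)) \<subseteq> {1..}" using s by auto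
  have "invred (shift (unsh m (Rf m u)) m)" using invred_shift[OF s1, of m] r by simp
  then have "invred (Rf m u)" using shift_unsh[of "Rf m u" m] set_Rf by auto
  then show ?thesis using l by (simp add: Wp_def)
qed

lemma Wset_red: assumes "u \<in> Wset m n \<pi> \<sigma>" shows "u \<in> R (m+n) (pw u)"
  using main_claim[OF refl Wset_Wp[OF assms]] Wset_letters[OF assms] by (simp add: R_iff)

lemma Wset_closed:
  assumes u0: "u0 \<in> Wset m n \<pi> \<sigma>" and u: "u \<in> R (m+n) (pw u0)"
  shows "u \<in> Wset m n \<pi> \<sigma>"
proof -
  have su: "set u \<subseteq> {1..m+n}" "invred u" "pw u = pw u0" using u by (auto simp: R_iff)
  have "Wp m u \<and> sameP m u0 u" using main_claim[OF refl Wset_Wp[OF u0]] su by blast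
  then have W: "Wp m u" and S: "sameP m u0 u" by auto
  have "Lf m u \<in> R m \<pi>"
  proof -
    have "set (Lf m u) \<subseteq> {1..m}" using su(1) by (auto simp: Lf_def)
    moreover have "pw (Lf m u) = \<pi>" using S u0 by (simp add: sameP_def Wset_def R_iff)
    moreover have "invred (Lf m u)" using W by (simp add: Wp_def)
    ultimately show ?thesis by (simp add: R_iff)
  qed
  moreover have "unsh m (Rf m u) \<in> R n \<sigma>"
  proof -
    define b where "b = unsh m (Rf m u)"
    define b0 where "b0 = unsh m (Rf m u0)"
    have lu: "\<And>x. x \<in> set u \<Longrightarrow> 1 \<le> x \<and> x \<le> m+n" using su(1) by auto
    have sb: "set b \<subseteq> {1..n}"
    proof
      fix y assume "y \<in> set b"
      then obtain x where "x \<in> set u" "\<not> x \<le> m" "y = x - m" by (auto simp: b_def unsh_def Rf_def)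
      then show "y \<in> {1..n}" using lu[of x] by auto
    qed
    have b0: "b0 \<in> R n \<sigma>" using u0 by (simp add: b0_def Wset_def)
    have sb0: "set b0 \<subseteq> {1..n}" using b0 by (simp add: R_iff)
    have eb: "shift b m = Rf m u" unfolding b_def using shift_unsh set_Rf by blast
    have eb0: "shift b0 m = Rf m u0" unfolding b0_def using shift_unsh set_Rf by blast
    have "pw (shift b m) = pw (shift b0 m)" using S eb eb0 by (simp add: sameP_def)
    moreover have "set b \<subseteq> {1..}" "set b0 \<subseteq> {1..}" using sb sb0 by auto
    ultimately have "pw b = pw b0" using pw_shift_inj[of b b0 m] by blast
    then have "pw b = \<sigma>" using b0 by (simp add: R_iff)
    moreover have "invred b"
    proof -
      have sb1: "set b \<subseteq> {1..}" using sb by auto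
      have "invred (Rf m u)" using W by (simp add: Wp_def)
      then show ?thesis using eb invred_shift[OF sb1, of m] by simp
    qed
    ultimately show ?thesis using sb by (simp add: R_iff b_def)
  qed
  ultimately show ?thesis by (simp add: Wset_def)
qed

lemma invred_ii_mid: "\<not> invred (x @ [i,i] @ y)"
  using not_invred_ii invred_prefix by (metis append_assoc)

lemma Wset_FC:
  assumes fp: "fully_commutative m \<pi>" and fs: "fully_commutative n \<sigma>"
    and u0: "u0 \<in> Wset m n \<pi> \<sigma>"
  shows "fully_commutative (m+n) (pw u0)"
  unfolding fully_commutative_def
proof (intro ballI notI)
  fix w assume w: "w \<in> R (m+n) (pw u0)"
  assume "\<exists>x y i. w = x @ [i, Suc i, i] @ y"
  then obtain x y i where wi: "w = x @ [i, Suc i, i] @ y" by blast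
  have ww: "w \<in> Wset m n \<pi> \<sigma>" using Wset_closed[OF u0 w] .
  show False
  proof (cases "Suc i \<le> m")
    case True
    then have "Lf m w = Lf m x @ [i, Suc i, i] @ Lf m y" using wi by (simp add: Lf_def)
    moreover have "Lf m w \<in> R m \<pi>" using ww by (simp add: Wset_def)
    ultimately show False using fp unfolding fully_commutative_def by blast
  next
    case False
    show False
    proof (cases "i = m")
      case True
      then have "Lf m w = Lf m x @ [i, i] @ Lf m y" using wi by (simp add: Lf_def)
      moreover have "invred (Lf m w)" using Wset_Wp[OF ww] by (simp add: Wp_def)
      ultimately show False using invred_ii_mid by metis
    next
      case False
      then have im: "m < i" using \<open>\<not> Suc i \<le> m\<close> by linarith
      then have "Rf m w = Rf m x @ [i, Suc i, i] @ Rf m y" using wi by (simp add: Rf_def)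
      then have "unsh m (Rf m w) = unsh m (Rf m x) @ [i - m, Suc (i - m), i - m] @ unsh m (Rf m y)"
        using im by (simp add: unsh_def Suc_diff_le)
      moreover have "unsh m (Rf m w) \<in> R n \<sigma>" using ww by (simp add: Wset_def)
      ultimately show False using fs unfolding fully_commutative_def by blast
    qed
  qed
qed

lemma nabla_gen:
  assumes fp: "fully_commutative m \<pi>" and fs: "fully_commutative n \<sigma>"
  shows "nabla (perm_vec m \<pi> :: 'k::field vec) (perm_vec n \<sigma>) \<in> PiFC"
proof -
  define T where "T = pw ` Wset m n \<pi> \<sigma>"
  have Tperm: "\<tau> permutes {1..Suc (m+n)}" if tT: "\<tau> \<in> T" for \<tau>
  proof -
    obtain u where u: "u \<in> Wset m n \<pi> \<sigma>" "\<tau> = pw u" using tT T_def by blast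
    have "set u \<subseteq> {1..<Suc (m+n)}" using Wset_letters[OF u(1)] by auto
    then show ?thesis using pw_permutes u(2) by blast
  qed
  have finT: "finite T"
    by (rule finite_subset[of _ "{\<tau>. \<tau> permutes {1..Suc (m+n)}}"]) (use Tperm finite_permutations in auto)
  have eq: "nabla (perm_vec m \<pi> :: 'k vec) (perm_vec n \<sigma>) = (\<lambda>t. \<Sum>\<tau>\<in>T. 1 * (perm_vec (m+n) \<tau> :: 'k vec) t)"
  proof
    fix t :: label
    obtain u k where t: "t = (u,k)" by (cases t)
    have "(\<Sum>\<tau>\<in>T. 1 * (perm_vec (m+n) \<tau> :: 'k vec) (u,k)) =
          (\<Sum>\<tau>\<in>T. if \<tau> = pw u then (if k = m+n \<and> u \<in> R (m+n) (pw u) then 1 else 0) else 0)"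
      by (intro sum.cong refl) (auto simp: pv_eval R_iff)
    also have "\<dots> = (if pw u \<in> T \<and> k = m+n \<and> u \<in> R (m+n) (pw u) then 1 else 0)"
      by (simp add: sum.delta[OF finT])
    also have "\<dots> = (if k = m+n \<and> u \<in> Wset m n \<pi> \<sigma> then 1 else 0)"
    proof -
      have "pw u \<in> T \<and> u \<in> R (m+n) (pw u) \<longleftrightarrow> u \<in> Wset m n \<pi> \<sigma>"
      proof
        assume a: "pw u \<in> T \<and> u \<in> R (m+n) (pw u)"
        then obtain u0 where "u0 \<in> Wset m n \<pi> \<sigma>" "pw u = pw u0" using T_def by auto
        then show "u \<in> Wset m n \<pi> \<sigma>" using Wset_closed a by metis
      next
        assume "u \<in> Wset m n \<pi> \<sigma>"
        then show "pw u \<in> T \<and> u \<in> R (m+n) (pw u)" using Wset_red T_def by blast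
      qed
      then show ?thesis by auto
    qed
    moreover have "nabla (perm_vec m \<pi> :: 'k vec) (perm_vec n \<sigma>) (u,k) = (if k = m+n \<and> u \<in> Wset m n \<pi> \<sigma> then 1 else 0)"
      by (rule nabla_pv)
    ultimately show "nabla (perm_vec m \<pi> :: 'k vec) (perm_vec n \<sigma>) t = (\<Sum>\<tau>\<in>T. 1 * (perm_vec (m+n) \<tau> :: 'k vec) t)"
      using t by simp
  qed
  have gensT: "(perm_vec (m+n) \<tau> :: 'k vec) \<in> PiFC" if tT: "\<tau> \<in> T" for \<tau>
  proof -
    obtain u where u: "u \<in> Wset m n \<pi> \<sigma>" "\<tau> = pw u" using tT T_def by blast
    have "fully_commutative (m+n) \<tau>" using Wset_FC[OF fp fs u(1)] u(2) by simp
    then show ?thesis unfolding PiFC_def using Tperm[OF tT] by (intro span_gen) blast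
  qed
  show ?thesis unfolding eq PiFC_def
    by (rule span_sum[OF finT]) (use gensT in \<open>simp add: PiFC_def\<close>)
qed



section \<open>Coproduct of generators\<close>

lemma Delta_pv:
  "Delta (perm_vec n \<pi> :: 'k::field vec) ((a1,a2),(c1,c2)) = (if a2 = n \<and> c2 = n \<and> a1 @ c1 \<in> R n \<pi> then 1 else 0)"
proof -
  have db: "(delta_basis (w,n) ((a1,a2),(c1,c2)) :: 'k) = (if w = a1 @ c1 then (if a2 = n \<and> c2 = n then 1 else 0) else 0)" for w
  proof -
    have iff: "(i \<le> length w \<and> take i w = a1 \<and> drop i w = c1) = (w = a1 @ c1 \<and> i = length a1)" for i
    proof
      assume h: "i \<le> length w \<and> take i w = a1 \<and> drop i w = c1"
      then have "w = a1 @ c1" by (metis append_take_drop_id)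
      moreover have "length a1 = i" using h by auto
      ultimately show "w = a1 @ c1 \<and> i = length a1" by simp
    qed auto
    have "{i. i \<le> length w \<and> (a1,a2) = (take i w, n) \<and> (c1,c2) = (drop i w, n)} =
          {i. (a2 = n \<and> c2 = n \<and> w = a1 @ c1) \<and> i = length a1}"
    proof (rule Collect_cong)
      fix i show "(i \<le> length w \<and> (a1,a2) = (take i w, n) \<and> (c1,c2) = (drop i w, n)) =
          ((a2 = n \<and> c2 = n \<and> w = a1 @ c1) \<and> i = length a1)"
        using iff[of i] by auto
    qed
    moreover have "card {i. Q \<and> i = (l::nat)} = (if Q then 1 else 0)" for Q l
      by (cases Q) auto
    ultimately show ?thesis by (simp add: delta_basis_def)
  qed
  have "Delta (perm_vec n \<pi> :: 'k vec) ((a1,a2),(c1,c2)) = (\<Sum>w\<in>R n \<pi>. (delta_basis (w,n) ((a1,a2),(c1,c2)) :: 'k))"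
    unfolding Delta_def by (simp add: sum_supp_pv pv_eval)
  also have "\<dots> = (\<Sum>w\<in>R n \<pi>. if w = a1 @ c1 then (if a2 = n \<and> c2 = n then 1 else 0) else 0)"
    by (intro sum.cong refl) (simp add: db)
  also have "\<dots> = (if a1 @ c1 \<in> R n \<pi> then (if a2 = n \<and> c2 = n then 1 else 0) else 0)"
    by (simp add: sum.delta[OF finite_R])
  finally show ?thesis by auto
qed

definition Pairs :: "nat \<Rightarrow> (nat \<Rightarrow> nat) \<Rightarrow> ((nat \<Rightarrow> nat) \<times> (nat \<Rightarrow> nat)) set" where
  "Pairs n \<pi> = {(\<sigma>,\<rho>). \<sigma> permutes {1..Suc n} \<and> \<rho> permutes {1..Suc n} \<and> \<sigma> \<circ> \<rho> = \<pi> \<and> ninv \<sigma> + ninv \<rho> = ninv \<pi>}"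

lemma finite_Pairs: "finite (Pairs n \<pi>)"
proof -
  have "Pairs n \<pi> \<subseteq> {\<sigma>. \<sigma> permutes {1..Suc n}} \<times> {\<rho>. \<rho> permutes {1..Suc n}}"
    by (auto simp: Pairs_def)
  moreover have "finite ({\<sigma>. \<sigma> permutes {1..Suc n}} \<times> {\<rho>. \<rho> permutes {1..Suc n}})"
    by (intro finite_cartesian_product finite_permutations) simp_all
  ultimately show ?thesis by (rule finite_subset)
qed

lemma pw_perm_n: "set w \<subseteq> {1..n} \<Longrightarrow> pw w permutes {1..Suc n}"
proof -
  assume "set w \<subseteq> {1..n}"
  then have "set w \<subseteq> {1..<Suc n}" by auto
  then show ?thesis by (rule pw_permutes)
qed

lemma concat_red:
  "a1 @ c1 \<in> R n \<pi> \<longleftrightarrow> (pw a1, pw c1) \<in> Pairs n \<pi> \<and> a1 \<in> R n (pw a1) \<and> c1 \<in> R n (pw c1)"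
proof
  assume a: "a1 @ c1 \<in> R n \<pi>"
  then have s: "set a1 \<subseteq> {1..n}" "set c1 \<subseteq> {1..n}" "pw (a1@c1) = \<pi>" "invred (a1@c1)"
    by (auto simp: R_iff)
  have ia: "invred a1" using s(4) invred_prefix by blast
  have ic: "invred c1" using s(4) invred_suffix by blast
  have "ninv (pw a1) + ninv (pw c1) = ninv \<pi>" using ia ic s(3,4) by (simp add: invred_def)
  moreover have "pw a1 \<circ> pw c1 = \<pi>" using s(3) by (simp add: pw_append)
  ultimately have "(pw a1, pw c1) \<in> Pairs n \<pi>" using s(1,2) pw_perm_n by (auto simp: Pairs_def)
  then show "(pw a1, pw c1) \<in> Pairs n \<pi> \<and> a1 \<in> R n (pw a1) \<and> c1 \<in> R n (pw c1)"
    using ia ic s by (simp add: R_iff)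
next
  assume a: "(pw a1, pw c1) \<in> Pairs n \<pi> \<and> a1 \<in> R n (pw a1) \<and> c1 \<in> R n (pw c1)"
  then have p: "pw a1 \<circ> pw c1 = \<pi>" "ninv (pw a1) + ninv (pw c1) = ninv \<pi>" by (auto simp: Pairs_def)
  have s: "set a1 \<subseteq> {1..n}" "set c1 \<subseteq> {1..n}" "invred a1" "invred c1" using a by (auto simp: R_iff)
  have "pw (a1@c1) = \<pi>" using p by (simp add: pw_append)
  moreover have "invred (a1@c1)" using p s calculation by (simp add: invred_def)
  ultimately show "a1 @ c1 \<in> R n \<pi>" using s by (simp add: R_iff)
qed

lemma Delta_pv_sum:
  "Delta (perm_vec n \<pi> :: 'k::field vec) =
     (\<lambda>t. \<Sum>q\<in>Pairs n \<pi>. 1 * tensor (perm_vec n (fst q)) (perm_vec n (snd q)) t)"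
proof
  fix t :: "label \<times> label"
  obtain a1 a2 c1 c2 where t: "t = ((a1,a2),(c1,c2))" by (metis prod.exhaust)
  have "(\<Sum>q\<in>Pairs n \<pi>. 1 * tensor (perm_vec n (fst q) :: 'k vec) (perm_vec n (snd q)) ((a1,a2),(c1,c2))) =
        (\<Sum>q\<in>Pairs n \<pi>. if q = (pw a1, pw c1) then (if a2 = n \<and> c2 = n \<and> a1 \<in> R n (pw a1) \<and> c1 \<in> R n (pw c1) then 1 else 0) else 0)"
    by (intro sum.cong refl) (auto simp: tensor_def pv_eval R_iff)
  also have "\<dots> = (if (pw a1, pw c1) \<in> Pairs n \<pi> then (if a2 = n \<and> c2 = n \<and> a1 \<in> R n (pw a1) \<and> c1 \<in> R n (pw c1) then 1 else 0) else 0)"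
    by (simp add: sum.delta[OF finite_Pairs])
  also have "\<dots> = (if a2 = n \<and> c2 = n \<and> a1 @ c1 \<in> R n \<pi> then 1 else 0)"
    using concat_red[of a1 c1 n \<pi>] by auto
  also have "\<dots> = Delta (perm_vec n \<pi> :: 'k vec) ((a1,a2),(c1,c2))" by (simp add: Delta_pv)
  finally show "Delta (perm_vec n \<pi> :: 'k vec) t = (\<Sum>q\<in>Pairs n \<pi>. 1 * tensor (perm_vec n (fst q)) (perm_vec n (snd q)) t)"
    using t by simp
qed

lemma exists_R: "p permutes {1..Suc n} \<Longrightarrow> \<exists>w. w \<in> R n p"
proof -
  assume "p permutes {1..Suc n}"
  then obtain w where w: "set w \<subseteq> {1..<Suc n}" "pw w = p" "length w = ninv p" using bubble by blast
  then have "w \<in> R n p" by (auto simp: R_iff invred_def)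
  then show ?thesis by blast
qed

lemma Pairs_FC:
  assumes fc: "fully_commutative n \<pi>" and q: "(\<sigma>,\<rho>) \<in> Pairs n \<pi>"
  shows "fully_commutative n \<sigma>" "fully_commutative n \<rho>"
proof -
  have ps: "\<sigma> permutes {1..Suc n}" "\<rho> permutes {1..Suc n}" using q by (auto simp: Pairs_def)
  obtain x0 where x0: "x0 \<in> R n \<sigma>" using exists_R[OF ps(1)] by blast
  obtain y0 where y0: "y0 \<in> R n \<rho>" using exists_R[OF ps(2)] by blast
  have cat: "x @ y \<in> R n \<pi>" if "x \<in> R n \<sigma>" "y \<in> R n \<rho>" for x y
  proof -
    have "pw x = \<sigma>" "pw y = \<rho>" using that by (auto simp: R_iff)
    then show ?thesis using concat_red[of x y n \<pi>] q that by simp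
  qed
  show "fully_commutative n \<sigma>" unfolding fully_commutative_def
  proof (intro ballI notI)
    fix x assume x: "x \<in> R n \<sigma>" and "\<exists>u v i. x = u @ [i, Suc i, i] @ v"
    then obtain u v i where "x = u @ [i, Suc i, i] @ v" by blast
    then have "x @ y0 = u @ [i, Suc i, i] @ (v @ y0)" by simp
    then show False using cat[OF x y0] fc unfolding fully_commutative_def by blast
  qed
  show "fully_commutative n \<rho>" unfolding fully_commutative_def
  proof (intro ballI notI)
    fix y assume y: "y \<in> R n \<rho>" and "\<exists>u v i. y = u @ [i, Suc i, i] @ v"
    then obtain u v i where "y = u @ [i, Suc i, i] @ v" by blast
    then have "x0 @ y = (x0 @ u) @ [i, Suc i, i] @ v" by simp
    then show False using cat[OF x0 y] fc unfolding fully_commutative_def by blast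
  qed
qed

lemma gen_PiFC: "p permutes {1..Suc n} \<Longrightarrow> fully_commutative n p \<Longrightarrow> (perm_vec n p :: 'k::field vec) \<in> PiFC"
  unfolding PiFC_def by (intro span_gen) blast

lemma Delta_gen:
  assumes "fully_commutative n \<pi>"
  shows "Delta (perm_vec n \<pi> :: 'k::field vec) \<in> tensor_sq PiFC"
proof -
  have "tensor (perm_vec n (fst q) :: 'k vec) (perm_vec n (snd q)) \<in> {tensor x y |x y. x \<in> PiFC \<and> y \<in> PiFC}"
    if qP: "q \<in> Pairs n \<pi>" for q
  proof -
    obtain \<sigma> \<rho> where q: "q = (\<sigma>,\<rho>)" by (cases q)
    have "fully_commutative n \<sigma>" "fully_commutative n \<rho>" using Pairs_FC assms qP q by blast+
    moreover have "\<sigma> permutes {1..Suc n}" "\<rho> permutes {1..Suc n}" using qP q by (auto simp: Pairs_def)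
    ultimately show ?thesis using q gen_PiFC by fastforce
  qed
  then have "tensor (perm_vec n (fst q) :: 'k vec) (perm_vec n (snd q)) \<in> tensor_sq PiFC" if "q \<in> Pairs n \<pi>" for q
    unfolding tensor_sq_def using that by (intro span_gen) blast
  then show ?thesis unfolding Delta_pv_sum tensor_sq_def
    by (rule span_sum[OF finite_Pairs]) (simp add: tensor_sq_def)
qed

section \<open>Homogeneous components and unit\<close>

lemma homog_pv: "homog d (perm_vec n p :: 'k::field vec) = (if ninv p = d then perm_vec n p else (\<lambda>t. 0))"
proof (rule ext)
  fix t :: label
  obtain w k where t: "t = (w,k)" by (cases t)
  have "w \<in> R n p \<Longrightarrow> length w = ninv p" by (auto simp: R_iff invred_def)
  then show "homog d (perm_vec n p :: 'k vec) t = (if ninv p = d then perm_vec n p else (\<lambda>t. 0)) t"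
    using t by (auto simp: homog_def pv_eval)
qed

lemma homog_comb: "homog d (\<lambda>t. \<Sum>g\<in>A. c g * g t) = (\<lambda>t. \<Sum>g\<in>A. (c g :: 'k::field) * homog d g t)"
  by (rule ext) (auto simp: homog_def)

lemma unit_in: "(unit_vec :: 'k::field vec) \<in> PiFC"
proof -
  have R0: "R 0 id = {[]}"
  proof -
    have "w \<in> R 0 id \<longleftrightarrow> w = []" for w
    proof
      assume "w \<in> R 0 id" then show "w = []" by (auto simp: R_iff)
    next
      assume "w = []" then show "w \<in> R 0 id" by (simp add: R_iff)
    qed
    then show ?thesis by blast
  qed
  have "(perm_vec 0 id :: 'k vec) = unit_vec"
  proof
    fix t :: label
    obtain w k where t: "t = (w,k)" by (cases t)
    show "(perm_vec 0 id :: 'k vec) t = unit_vec t" using t by (auto simp: pv_eval R0 unit_vec_def bvec_def)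
  qed
  moreover have "fully_commutative 0 id" by (simp add: fully_commutative_def R0)
  moreover have "(id :: nat \<Rightarrow> nat) permutes {1..Suc 0}" by (rule permutes_id)
  ultimately show ?thesis using gen_PiFC by metis
qed



lemma PiFC_rep:
  assumes "x \<in> (PiFC :: 'k::field vec set)"
  obtains A c where "finite A" "\<And>g. g \<in> A \<Longrightarrow> \<exists>n p. g = perm_vec n p \<and> p permutes {1..Suc n} \<and> fully_commutative n p"
    "x = (\<lambda>t. \<Sum>g\<in>A. c g * g t)"
proof -
  from assms obtain A c where "finite A" "A \<subseteq> {perm_vec n p | n p. p permutes {1..Suc n} \<and> fully_commutative n p}"
    "x = (\<lambda>t. \<Sum>g\<in>A. c g * g t)" unfolding PiFC_def lin_span_def by blast
  then show ?thesis using that by blast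
qed

lemma homog_in: assumes "x \<in> (PiFC :: 'k::field vec set)" shows "homog d x \<in> PiFC"
proof -
  obtain A c where A: "finite A" "\<And>g. g \<in> A \<Longrightarrow> \<exists>n p. g = perm_vec n p \<and> p permutes {1..Suc n} \<and> fully_commutative n p"
    "x = (\<lambda>t. \<Sum>g\<in>A. c g * g t)" using PiFC_rep[OF assms] by blast
  have "homog d g \<in> PiFC" if gA: "g \<in> A" for g
  proof -
    obtain n p where g: "g = perm_vec n p" "p permutes {1..Suc n}" "fully_commutative n p" using A(2)[OF gA] by blast
    have z: "(\<lambda>t. 0) \<in> (PiFC :: 'k vec set)" unfolding PiFC_def by (rule span_zero)
    have gp: "(perm_vec n p :: 'k vec) \<in> PiFC" by (rule gen_PiFC[OF g(2,3)])
    have h: "homog d (perm_vec n p :: 'k vec) = (if ninv p = d then perm_vec n p else (\<lambda>t. 0))" by (rule homog_pv)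
    show ?thesis using g(1) gp h z by (cases "ninv p = d") simp_all
  qed
  then show ?thesis unfolding A(3) homog_comb unfolding PiFC_def
    by (rule span_sum[OF A(1)]) (simp add: PiFC_def)
qed

lemma gen_finite_supp: "\<exists>n p. g = perm_vec n p \<and> p permutes {1..Suc n} \<and> fully_commutative n p \<Longrightarrow> finite (supp (g :: 'k::field vec))"
proof -
  assume "\<exists>n p. g = perm_vec n p \<and> p permutes {1..Suc n} \<and> fully_commutative n p"
  then obtain n p where "g = perm_vec n p" by blast
  then show ?thesis using finite_supp_pv by simp
qed

lemma nabla_in: assumes "x \<in> (PiFC :: 'k::field vec set)" "y \<in> PiFC" shows "nabla x y \<in> PiFC"
proof -
  obtain A c where A: "finite A" "\<And>g. g \<in> A \<Longrightarrow> \<exists>n p. g = perm_vec n p \<and> p permutes {1..Suc n} \<and> fully_commutative n p"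
    "x = (\<lambda>t. \<Sum>g\<in>A. c g * g t)" using PiFC_rep[OF assms(1)] by blast
  obtain B d where B: "finite B" "\<And>g. g \<in> B \<Longrightarrow> \<exists>n p. g = perm_vec n p \<and> p permutes {1..Suc n} \<and> fully_commutative n p"
    "y = (\<lambda>t. \<Sum>g\<in>B. d g * g t)" using PiFC_rep[OF assms(2)] by blast
  have fA: "\<And>g. g \<in> A \<Longrightarrow> finite (supp g)" by (rule gen_finite_supp, rule A(2))
  have fB: "\<And>g. g \<in> B \<Longrightarrow> finite (supp g)" by (rule gen_finite_supp, rule B(2))
  have inner: "nabla g y = (\<lambda>t. \<Sum>h\<in>B. d h * nabla g h t)" for g
  proof -
    have "nabla g y = lift (\<lambda>b2 t. \<Sum>b1\<in>supp g. g b1 * nabla_basis b1 b2 t) y" by (rule nabla_lift2)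
    also have "\<dots> = (\<lambda>t. \<Sum>h\<in>B. d h * lift (\<lambda>b2 t. \<Sum>b1\<in>supp g. g b1 * nabla_basis b1 b2 t) h t)"
      unfolding B(3) by (rule lift_lin[OF B(1) fB])
    also have "\<dots> = (\<lambda>t. \<Sum>h\<in>B. d h * nabla g h t)" by (simp add: nabla_lift2[symmetric])
    finally show ?thesis .
  qed
  have "nabla x y = lift (\<lambda>b1 t. lift (nabla_basis b1) y t) x" by (rule nabla_lift1)
  also have "\<dots> = (\<lambda>t. \<Sum>g\<in>A. c g * lift (\<lambda>b1 t. lift (nabla_basis b1) y t) g t)"
    unfolding A(3) by (rule lift_lin[OF A(1) fA])
  also have "\<dots> = (\<lambda>t. \<Sum>g\<in>A. c g * nabla g y t)" by (simp add: nabla_lift1[symmetric])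
  finally have eq: "nabla x y = (\<lambda>t. \<Sum>g\<in>A. c g * nabla g y t)" .
  have "nabla g y \<in> PiFC" if gA: "g \<in> A" for g
  proof -
    obtain n p where g: "g = perm_vec n p" "fully_commutative n p" using A(2)[OF gA] by blast
    have "nabla g h \<in> PiFC" if hB: "h \<in> B" for h
    proof -
      obtain n' p' where h: "h = perm_vec n' p'" "fully_commutative n' p'" using B(2)[OF hB] by blast
      have "nabla (perm_vec n p :: 'k vec) (perm_vec n' p') \<in> PiFC" by (rule nabla_gen[OF g(2) h(2)])
      then show ?thesis using g h by simp
    qed
    then show ?thesis unfolding inner PiFC_def by (rule span_sum[OF B(1)]) (simp add: PiFC_def)
  qed
  then show ?thesis unfolding eq PiFC_def by (rule span_sum[OF A(1)]) (simp add: PiFC_def)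
qed

lemma Delta_in: assumes "x \<in> (PiFC :: 'k::field vec set)" shows "Delta x \<in> tensor_sq PiFC"
proof -
  obtain A c where A: "finite A" "\<And>g. g \<in> A \<Longrightarrow> \<exists>n p. g = perm_vec n p \<and> p permutes {1..Suc n} \<and> fully_commutative n p"
    "x = (\<lambda>t. \<Sum>g\<in>A. c g * g t)" using PiFC_rep[OF assms] by blast
  have fA: "\<And>g. g \<in> A \<Longrightarrow> finite (supp g)" by (rule gen_finite_supp, rule A(2))
  have eq: "Delta x = (\<lambda>t. \<Sum>g\<in>A. c g * Delta g t)"
    unfolding Delta_lift A(3) by (rule lift_lin[OF A(1) fA])
  have "Delta g \<in> tensor_sq PiFC" if gA: "g \<in> A" for g
  proof -
    obtain n p where g: "g = perm_vec n p" "fully_commutative n p" using A(2)[OF gA] by blast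
    have "Delta (perm_vec n p :: 'k vec) \<in> tensor_sq PiFC" by (rule Delta_gen[OF g(2)])
    then show ?thesis using g by simp
  qed
  then show ?thesis unfolding eq tensor_sq_def by (rule span_sum[OF A(1)]) (simp add: tensor_sq_def)
qed

theorem corollary4p12:
  shows "graded_sub_bialgebra (PiFC :: 'k::field vec set)"
  unfolding graded_sub_bialgebra_def
proof (intro conjI ballI allI)
  show "PiFC \<subseteq> (Pi_space :: 'k vec set)" unfolding PiFC_def Pi_space_def by (rule span_mono) blast
  show "(\<lambda>t. 0) \<in> (PiFC :: 'k vec set)" unfolding PiFC_def by (rule span_zero)
  fix x y :: "'k vec" and c :: 'k and d :: nat
  show "x \<in> PiFC \<Longrightarrow> y \<in> PiFC \<Longrightarrow> (\<lambda>t. x t + y t) \<in> PiFC" unfolding PiFC_def by (rule span_add)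
  show "x \<in> PiFC \<Longrightarrow> (\<lambda>t. c * x t) \<in> PiFC" unfolding PiFC_def by (rule span_smult)
  show "x \<in> PiFC \<Longrightarrow> homog d x \<in> PiFC" by (rule homog_in)
  show "(unit_vec :: 'k vec) \<in> PiFC" by (rule unit_in)
  show "x \<in> PiFC \<Longrightarrow> y \<in> PiFC \<Longrightarrow> nabla x y \<in> PiFC" by (rule nabla_in)
  show "x \<in> PiFC \<Longrightarrow> Delta x \<in> tensor_sq PiFC" by (rule Delta_in)
qed

end
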